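(* Let $\tau$ be any substitution and let $g=(v,aub,w)$ be a generator for $\tau$ whose center has at least two letters, where $v,w\in\mathcal{A}^+$, $u\in\mathcal{A}^*$ and $a,b\in\mathcal{A}$. Then $g$ is basic if and only if $|\tau(a)|>|v|$ and $|\tau(b)|>|w|$.
   Context: Let $\mathcal{A}$ be a finite nonempty alphabet, $\mathcal{A}^*$ the finite words over $\mathcal{A}$ (including the empty word), $\mathcal{A}^+$ the nonempty words, $|u|$ the length of $u$. A word $u$ is a factor of $v$ if $v=w_1uw_2$ for some words $w_1,w_2$. A substitution is a map $\tau:\mathcal{A}\to\mathcal{A}^+$ extended to a concatenation-respecting map on words. The language $\mathcal{L}(\tau)$ is the set of words that are factors of $\tau^n(a)$ for some letter $a$ and some $n\ge1$. A generator for $\tau$ is a triple $(v,u,w)$ with $v,u,w\in\mathcal{A}^+$, $u\in\mathcal{L}(\tau)$ and $\tau(u)=vuw$; $v$, $u$, $w$ are its left wing, center and right wing, and its length is $|u|$. If $(v,u,cw)$ is a generator with $c\in\mathcal{A}$, $w\in\mathcal{A}^*$, its right extension is the generator $(v,uc,w\tau(c))$; if $(vc,u,w)$ is a generator with $c\in\mathcal{A}$, $v\in\mathcal{A}^*$, its left extension is the generator $(\tau(c)v,cu,w)$. Two generators $g_1,g_2$ are G related ($g_1\sim_G g_2$) if there is a generator $g_3$ obtainable from $g_1$ and also from $g_2$ by finite (possibly empty) sequences of left and right extensions. A generator is basic if it is not G related to any generator of smaller length. *)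

theory Defs
  imports Main
begin

definition subst_word :: "('a \<Rightarrow> 'a list) \<Rightarrow> 'a list \<Rightarrow> 'a list" where
  "subst_word \<tau> w = concat (map \<tau> w)"

definition is_factor :: "'a list \<Rightarrow> 'a list \<Rightarrow> bool" where
  "is_factor u v \<longleftrightarrow> (\<exists>w1 w2. v = w1 @ u @ w2)"

definition subst_lang :: "('a \<Rightarrow> 'a list) \<Rightarrow> 'a list set" where
  "subst_lang \<tau> = {u. \<exists>a n. n \<ge> 1 \<and> is_factor u ((subst_word \<tau> ^^ n) [a])}"

type_synonym 'a gen = "'a list \<times> 'a list \<times> 'a list"

definition generator :: "('a \<Rightarrow> 'a list) \<Rightarrow> 'a gen \<Rightarrow> bool" where
  "generator \<tau> g \<longleftrightarrow> (case g of (v, u, w) \<Rightarrow>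
     v \<noteq> [] \<and> u \<noteq> [] \<and> w \<noteq> [] \<and> u \<in> subst_lang \<tau> \<and> subst_word \<tau> u = v @ u @ w)"

definition gen_length :: "'a gen \<Rightarrow> nat" where
  "gen_length g = length (fst (snd g))"

inductive ext_step :: "('a \<Rightarrow> 'a list) \<Rightarrow> 'a gen \<Rightarrow> 'a gen \<Rightarrow> bool" for \<tau> where
  right_ext: "generator \<tau> (v, u, c # w) \<Longrightarrow> ext_step \<tau> (v, u, c # w) (v, u @ [c], w @ \<tau> c)"
| left_ext: "generator \<tau> (v @ [c], u, w) \<Longrightarrow> ext_step \<tau> (v @ [c], u, w) (\<tau> c @ v, c # u, w)"

definition G_related :: "('a \<Rightarrow> 'a list) \<Rightarrow> 'a gen \<Rightarrow> 'a gen \<Rightarrow> bool" where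
  "G_related \<tau> g1 g2 \<longleftrightarrow> (\<exists>g3. (ext_step \<tau>)\<^sup>*\<^sup>* g1 g3 \<and> (ext_step \<tau>)\<^sup>*\<^sup>* g2 g3)"

definition basic :: "('a \<Rightarrow> 'a list) \<Rightarrow> 'a gen \<Rightarrow> bool" where
  "basic \<tau> g \<longleftrightarrow> generator \<tau> g \<and>
     \<not> (\<exists>g'. generator \<tau> g' \<and> G_related \<tau> g g' \<and> gen_length g' < gen_length g)"

end

theory Submission
  imports Defs
begin

lemma sw_append[simp]: "subst_word t (x @ y) = subst_word t x @ subst_word t y"
  by (simp add: subst_word_def)

lemma sw_Cons[simp]: "subst_word t (c # y) = t c @ subst_word t y"
  by (simp add: subst_word_def)

lemma sw_Nil[simp]: "subst_word t [] = []"
  by (simp add: subst_word_def)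

lemma sw_len: assumes "\<forall>c. t c \<noteq> []" shows "length (subst_word t z) \<ge> length z"
proof (induction z)
  case (Cons c z)
  have "length (t c) \<ge> 1" using assms by (metis length_greater_0_conv Suc_le_eq One_nat_def)
  then show ?case using Cons by simp
qed simp

lemma inv:
  assumes "(ext_step t)\<^sup>*\<^sup>* g g3"
  shows "\<And>v U w V U3 W. g = (v,U,w) \<Longrightarrow> g3 = (V,U3,W) \<Longrightarrow> \<exists>x y. U3 = x@U@y \<and>
     length (subst_word t x) + length v = length V + length x \<and>
     length w + length (subst_word t y) = length y + length W"
  using assms
proof (induction rule: rtranclp_induct)
  case base
  then show ?case by (intro exI[of _ "[]"]) auto
next
  case (step g2 g3)
  from step.hyps(2) show ?case
  proof cases
    case (right_ext v2 u2 c w2)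
    from step.IH[OF step.prems(1), of v2 u2 "c # w2"] right_ext obtain x y where
      h: "u2 = x @ U @ y" "length (subst_word t x) + length v = length v2 + length x"
         "length w + length (subst_word t y) = length y + length (c # w2)" by auto
    show ?thesis using right_ext step.prems h
      by (intro exI[of _ x] exI[of _ "y @ [c]"]) auto
  next
    case (left_ext v2 c u2 w2)
    from step.IH[OF step.prems(1), of "v2 @ [c]" u2 w2] left_ext obtain x y where
      h: "u2 = x @ U @ y" "length (subst_word t x) + length v = length (v2 @ [c]) + length x"
         "length w + length (subst_word t y) = length y + length w2" by auto
    show ?thesis using left_ext step.prems h
      by (intro exI[of _ "c # x"] exI[of _ y]) auto
  qed
qed

lemma lang_factor: "u \<in> subst_lang t \<Longrightarrow> u = p @ q @ s \<Longrightarrow> q \<in> subst_lang t"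
  unfolding subst_lang_def is_factor_def
  by auto (metis append.assoc)

theorem mainTheorem2:
  fixes \<tau> :: "'a::finite \<Rightarrow> 'a list"
    and v u w :: "'a list" and a b :: 'a
  assumes "\<forall>c. \<tau> c \<noteq> []"
    and "generator \<tau> (v, a # u @ [b], w)"
  shows "basic \<tau> (v, a # u @ [b], w) \<longleftrightarrow> length (\<tau> a) > length v \<and> length (\<tau> b) > length w"
proof
  have gen: "v \<noteq> []" "w \<noteq> []" "a # u @ [b] \<in> subst_lang \<tau>"
    "subst_word \<tau> (a # u @ [b]) = v @ (a # u @ [b]) @ w"
    using assms(2) unfolding generator_def by auto
  assume B: "basic \<tau> (v, a # u @ [b], w)"
  show "length (\<tau> a) > length v \<and> length (\<tau> b) > length w"
  proof (rule ccontr)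
    assume "\<not> ?thesis"
    then consider "length (\<tau> a) \<le> length v" | "length (\<tau> b) \<le> length w" by linarith
    then show False
    proof cases
      case 1
      have e: "\<tau> a @ subst_word \<tau> (u @ [b]) = v @ (a # u @ [b]) @ w"
        using gen(4) by simp
      then obtain v' where v': "v = \<tau> a @ v'" using 1
        by (metis append_eq_append_conv_if append_take_drop_id)
      have e2: "subst_word \<tau> (u @ [b]) = (v' @ [a]) @ (u @ [b]) @ w"
        using e v' by simp
      have l: "u @ [b] \<in> subst_lang \<tau>" using lang_factor[OF gen(3), of "[a]" "u@[b]" "[]"] by simp
      have g': "generator \<tau> (v' @ [a], u @ [b], w)"
        unfolding generator_def using e2 l gen by auto
      have st: "ext_step \<tau> (v' @ [a], u @ [b], w) (v, a # u @ [b], w)"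
        using ext_step.left_ext[OF g'] v' by simp
      have "G_related \<tau> (v, a # u @ [b], w) (v' @ [a], u @ [b], w)"
        unfolding G_related_def using st by blast
      then have "\<exists>g'. generator \<tau> g' \<and> G_related \<tau> (v, a # u @ [b], w) g' \<and> gen_length g' < gen_length (v, a # u @ [b], w)"
        using g' by (intro exI[of _ "(v' @ [a], u @ [b], w)"]) (auto simp: gen_length_def)
      then show False using B unfolding basic_def by blast
    next
      case 2
      have e: "subst_word \<tau> (a # u) @ \<tau> b = v @ (a # u) @ b # w"
        using gen(4) by simp
      have e': "subst_word \<tau> (a # u) @ \<tau> b = (v @ (a # u) @ [b]) @ w" using e by simp
      then obtain us where "w = us @ \<tau> b \<or> (\<tau> b = us @ w)"
        unfolding append_eq_append_conv2 by blast
      then obtain w' where w': "w = w' @ \<tau> b" using 2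
        by (metis append_Nil le_add2 le_antisym length_0_conv length_append add.commute
            add_cancel_right_left)
      have e2: "subst_word \<tau> (a # u) = v @ (a # u) @ b # w'"
        using e w' by simp
      have l: "a # u \<in> subst_lang \<tau>" using lang_factor[OF gen(3), of "[]" "a # u" "[b]"] by simp
      have g': "generator \<tau> (v, a # u, b # w')"
        unfolding generator_def using e2 l gen by auto
      have st: "ext_step \<tau> (v, a # u, b # w') (v, a # u @ [b], w)"
        using ext_step.right_ext[OF g'] w' by simp
      have "G_related \<tau> (v, a # u @ [b], w) (v, a # u, b # w')"
        unfolding G_related_def using st by blast
      then have "\<exists>g'. generator \<tau> g' \<and> G_related \<tau> (v, a # u @ [b], w) g' \<and> gen_length g' < gen_length (v, a # u @ [b], w)"
        using g' by (intro exI[of _ "(v, a # u, b # w')"]) (auto simp: gen_length_def)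
      then show False using B unfolding basic_def by blast
    qed
  qed
next
  assume C: "length (\<tau> a) > length v \<and> length (\<tau> b) > length w"
  show "basic \<tau> (v, a # u @ [b], w)"
    unfolding basic_def
  proof (intro conjI notI assms(2))
    assume "\<exists>g'. generator \<tau> g' \<and> G_related \<tau> (v, a # u @ [b], w) g' \<and>
        gen_length g' < gen_length (v, a # u @ [b], w)"
    then obtain v' U' w' g3 where g': "generator \<tau> (v', U', w')"
      and r1: "(ext_step \<tau>)\<^sup>*\<^sup>* (v, a # u @ [b], w) g3"
      and r2: "(ext_step \<tau>)\<^sup>*\<^sup>* (v', U', w') g3"
      and len: "length U' < length (a # u @ [b])"
      unfolding G_related_def gen_length_def by auto
    obtain V U3 W where g3: "g3 = (V, U3, W)" by (cases g3) auto
    obtain x y where xy: "U3 = x @ (a # u @ [b]) @ y"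
      "length (subst_word \<tau> x) + length v = length V + length x"
      "length w + length (subst_word \<tau> y) = length y + length W"
      using inv[OF r1 refl g3] by blast
    obtain x' y' where xy': "U3 = x' @ U' @ y'"
      "length (subst_word \<tau> x') + length v' = length V + length x'"
      "length w' + length (subst_word \<tau> y') = length y' + length W"
      using inv[OF r2 refl g3] by blast
    have nz: "v' \<noteq> []" "w' \<noteq> []" using g' unfolding generator_def by auto
    have nz2: "length v' > 0" "length w' > 0" using nz by auto
    have "length x' > length x \<or> length y' > length y"
    proof -
      have l1: "length U3 = length x + (length u + 2) + length y" using xy(1) by simp
      have l2: "length U3 = length x' + length U' + length y'" using xy'(1) by simp
      show ?thesis using l1 l2 len by (simp; linarith)
    qed
    then show False
    proof
      assume lx: "length x' > length x"
      have eq: "x' @ (U' @ y') = x @ (a # u @ [b] @ y)" using xy xy' by simp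
      then obtain us where "x' = x @ us" "us @ U' @ y' = a # u @ [b] @ y"
        using lx by (auto simp: append_eq_append_conv2)
      moreover have "us \<noteq> []" using lx \<open>x' = x @ us\<close> by auto
      ultimately obtain z where z: "x' = x @ a # z"
        by (cases us) auto
      have "length (subst_word \<tau> z) \<ge> length z" using sw_len[OF assms(1)] .
      then show False using xy(2) xy'(2) z C nz2 by simp
    next
      assume ly: "length y' > length y"
      have eq: "(x' @ U') @ y' = (x @ a # u @ [b]) @ y" using xy xy' by simp
      then obtain us where us: "y' = us @ y" "(x' @ U') @ us = x @ a # u @ [b]"
        using ly unfolding append_eq_append_conv2 by auto
      have "us \<noteq> []" using ly us(1) by auto
      then obtain z c where zc: "us = z @ [c]" by (metis rev_exhaust)
      have "c = b" using us(2) zc by (metis append_assoc append_Cons append_Nil last_snoc)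
      then have z: "y' = z @ b # y" using us(1) zc by simp
      have "length (subst_word \<tau> z) \<ge> length z" using sw_len[OF assms(1)] .
      then show False using xy(3) xy'(3) z C nz2 by simp
    qed
  qed
qed

end
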